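(* Under the hypotheses of Lemma C2 (Pauli-spanned Cartan decomposition $\mathfrak g=\mathfrak k\oplus\mathfrak m$; pairwise commuting Pauli strings $b_1,\dots,b_d\in\tilde{\mathfrak m}$ in one connected component of the frustration graph of $\mathfrak g$; $2\le r\le d$ with $\tilde{\mathfrak k}^{r-1}_{1\dots r-2}$ non-empty), if in addition $\tilde{\mathfrak k}^r_{1\dots r-2}$ is non-empty, then $|\tilde{\mathfrak k}^{r-1}_{1\dots r-2}|=|\tilde{\mathfrak k}^r_{1\dots r-2}|$; equivalently, $|\tilde{\mathfrak k}^{r-1}_{1\dots r-2,r}|=|\tilde{\mathfrak k}^r_{1\dots r-1}|$.
   Context: Pauli strings on $n$ qubits are tensor products of $I,X,Y,Z$, not all identity; two Pauli strings either commute or anticommute. A Pauli-spanned Cartan decomposition is $\mathfrak g=\mathfrak k\oplus\mathfrak m\subseteq\mathfrak{su}(2^n)$ with $\mathfrak k=\mathrm{span}_{i\mathbb R}\tilde{\mathfrak k}$, $\mathfrak m=\mathrm{span}_{i\mathbb R}\tilde{\mathfrak m}$, $\mathfrak g=\mathrm{span}_{i\mathbb R}\tilde{\mathfrak g}$ with $\tilde{\mathfrak g}=\tilde{\mathfrak k}\sqcup\tilde{\mathfrak m}$ the set of all Pauli strings (up to phase) $\sigma$ with $i\sigma\in\mathfrak g$, and $[\mathfrak k,\mathfrak k]\subseteq\mathfrak k$, $[\mathfrak m,\mathfrak m]\subseteq\mathfrak k$, $[\mathfrak k,\mathfrak m]\subseteq\mathfrak m$. The frustration graph of $\mathfrak g$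 has vertex set $\tilde{\mathfrak g}$, with edges between anticommuting pairs. For disjoint index lists, $\tilde{\mathfrak k}^{i_1i_2\dots}_{j_1j_2\dots}$ is the set of $k\in\tilde{\mathfrak k}$ anticommuting with every $b_{i_p}$ and commuting with every $b_{j_q}$ (no condition on other indices). *)

theory Defs
  imports Main
begin

text \<open>Single-qubit Paulis, modulo phase.\<close>
datatype pauli = PI | PX | PY | PZ

fun pmul1 :: "pauli \<Rightarrow> pauli \<Rightarrow> pauli" where
  "pmul1 PI q = q"
| "pmul1 p PI = p"
| "pmul1 PX PX = PI" | "pmul1 PY PY = PI" | "pmul1 PZ PZ = PI"
| "pmul1 PX PY = PZ" | "pmul1 PY PX = PZ"
| "pmul1 PY PZ = PX" | "pmul1 PZ PY = PX"
| "pmul1 PZ PX = PY" | "pmul1 PX PZ = PY"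

type_synonym pstring = "nat \<Rightarrow> pauli"

definition pauli_strings :: "nat \<Rightarrow> pstring set" where
  "pauli_strings n = {s. (\<forall>j. n \<le> j \<longrightarrow> s j = PI) \<and> (\<exists>j<n. s j \<noteq> PI)}"

definition pmul :: "pstring \<Rightarrow> pstring \<Rightarrow> pstring" where
  "pmul s t = (\<lambda>j. pmul1 (s j) (t j))"

definition anticomm :: "nat \<Rightarrow> pstring \<Rightarrow> pstring \<Rightarrow> bool" where
  "anticomm n s t = odd (card {j\<in>{0..<n}. s j \<noteq> PI \<and> t j \<noteq> PI \<and> s j \<noteq> t j})"

text \<open>Pauli-spanned Cartan decomposition g = k + m given by the Pauli sets K (=k~) and M (=m~).
  Since distinct Pauli strings are linearly independent and [i s, i t] is 0 if s,t commute and
  a nonzero multiple of i (s t) otherwise, the bracket conditions on the spans are exactly the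
  following closure conditions on the generating Pauli sets.\<close>
definition pauli_cartan :: "nat \<Rightarrow> pstring set \<Rightarrow> pstring set \<Rightarrow> bool" where
  "pauli_cartan n K M \<longleftrightarrow>
     K \<subseteq> pauli_strings n \<and> M \<subseteq> pauli_strings n \<and> K \<inter> M = {} \<and>
     (\<forall>a\<in>K. \<forall>c\<in>K. anticomm n a c \<longrightarrow> pmul a c \<in> K) \<and>
     (\<forall>a\<in>M. \<forall>c\<in>M. anticomm n a c \<longrightarrow> pmul a c \<in> K) \<and>
     (\<forall>a\<in>K. \<forall>c\<in>M. anticomm n a c \<longrightarrow> pmul a c \<in> M)"

definition frustration_edges :: "nat \<Rightarrow> pstring set \<Rightarrow> (pstring \<times> pstring) set" where
  "frustration_edges n G = {(x, y). x \<in> G \<and> y \<in> G \<and> anticomm n x y}"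

text \<open>k~^{A}_{C}: elements of K anticommuting with all b_i (i in A) and commuting with all b_j (j in C).\<close>
definition ksub :: "nat \<Rightarrow> pstring set \<Rightarrow> (nat \<Rightarrow> pstring) \<Rightarrow> nat set \<Rightarrow> nat set \<Rightarrow> pstring set" where
  "ksub n K b A C = {k\<in>K. (\<forall>i\<in>A. anticomm n k (b i)) \<and> (\<forall>j\<in>C. \<not> anticomm n k (b j))}"

end

theory Submission imports Defs begin

definition c1 :: "pauli \<Rightarrow> pauli \<Rightarrow> bool" where
  "c1 p q = (p \<noteq> PI \<and> q \<noteq> PI \<and> p \<noteq> q)"

lemma c1_mul: "c1 (pmul1 p q) u = (c1 p u \<noteq> c1 q u)"
  by (cases p; cases q; cases u; simp add: c1_def)

lemma pmul1_cancel: "pmul1 (pmul1 p q) q = p"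
  by (cases p; cases q; simp)

lemma card_suc_filter:
  "card {j\<in>{0..<Suc (n::nat)}. P j} = card {j\<in>{0..<n}. P j} + (if P n then 1 else 0)"
proof -
  have "{j\<in>{0..<Suc n}. P j} = (if P n then insert n {j\<in>{0..<n}. P j} else {j\<in>{0..<n}. P j})"
    by (auto simp: less_Suc_eq)
  then show ?thesis by simp
qed

lemma parity_xor:
  "odd (card {j\<in>{0..<(n::nat)}. P j \<noteq> Q j}) = (odd (card {j\<in>{0..<n}. P j}) \<noteq> odd (card {j\<in>{0..<n}. Q j}))"
proof (induction n)
  case 0
  then show ?case by simp
next
  case (Suc n)
  show ?case unfolding card_suc_filter using Suc.IH by auto
qed

lemma anticomm_c1: "anticomm n s t = odd (card {j\<in>{0..<n}. c1 (s j) (t j)})"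
  by (simp add: anticomm_def c1_def)

lemma anti_mul: "anticomm n (pmul s t) u = (anticomm n s u \<noteq> anticomm n t u)"
  unfolding anticomm_c1 pmul_def c1_mul by (rule parity_xor)

lemma anti_sym: "anticomm n s t = anticomm n t s"
proof -
  have "{j\<in>{0..<n}. s j \<noteq> PI \<and> t j \<noteq> PI \<and> s j \<noteq> t j} = {j\<in>{0..<n}. t j \<noteq> PI \<and> s j \<noteq> PI \<and> t j \<noteq> s j}"
    by auto
  then show ?thesis unfolding anticomm_def by simp
qed

lemma anti_mul2: "anticomm n u (pmul s t) = (anticomm n u s \<noteq> anticomm n u t)"
  using anti_mul anti_sym by metis

lemma anti_self[simp]: "\<not> anticomm n s s"
  unfolding anticomm_def by simp

lemma pmul_cancel: "pmul (pmul s t) t = s"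
  unfolding pmul_def by (simp add: pmul1_cancel)

lemma pmul_comm: "pmul s t = pmul t s"
  unfolding pmul_def by (rule ext; case_tac "s j"; case_tac "t j"; simp)


definition closedP :: "nat \<Rightarrow> pstring set \<Rightarrow> bool" where
  "closedP n G = (\<forall>x\<in>G. \<forall>y\<in>G. anticomm n x y \<longrightarrow> pmul x y \<in> G)"

definition cent :: "nat \<Rightarrow> pstring set \<Rightarrow> pstring \<Rightarrow> pstring set" where
  "cent n G b = {g\<in>G. \<not> anticomm n g b}"

lemmas amul = anti_mul anti_mul2

lemma closedD: "closedP n G \<Longrightarrow> x \<in> G \<Longrightarrow> y \<in> G \<Longrightarrow> anticomm n x y \<Longrightarrow> pmul x y \<in> G"
  unfolding closedP_def by blast

lemma cent_closed: "closedP n G \<Longrightarrow> closedP n (cent n G b)"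
  unfolding closedP_def cent_def by (auto simp: amul)

lemma fe_sym: "(x, y) \<in> frustration_edges n S \<Longrightarrow> (y, x) \<in> frustration_edges n S"
  unfolding frustration_edges_def using anti_sym by blast

lemma fe_rtr_sym: "(x, y) \<in> (frustration_edges n S)\<^sup>* \<Longrightarrow> (y, x) \<in> (frustration_edges n S)\<^sup>*"
proof (induction rule: rtrancl_induct)
  case base then show ?case by simp
next
  case (step y z)
  then show ?case using fe_sym by (meson converse_rtrancl_into_rtrancl)
qed

lemma fe_edge: "x \<in> S \<Longrightarrow> y \<in> S \<Longrightarrow> anticomm n x y \<Longrightarrow> (x, y) \<in> (frustration_edges n S)\<^sup>*"
  unfolding frustration_edges_def by auto

lemma bridge:
  assumes cl: "closedP n G" and bG: "b \<in> G"
    and r: "r \<in> cent n G b" and r': "r' \<in> cent n G b" and rr': "anticomm n r r'"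
    and h: "h \<in> cent n G b" and h': "h' \<in> cent n G b" and hh': "anticomm n h h'"
    and g: "g \<in> G" "anticomm n g b" "anticomm n g r" "anticomm n g h"
  shows "(r, h) \<in> (frustration_edges n (cent n G b))\<^sup>*"
proof (cases "anticomm n r h")
  case True then show ?thesis using fe_edge[OF r h] by simp
next
  case rh: False
  have rG: "r \<in> G" "\<not> anticomm n r b" using r by (auto simp: cent_def)
  have hG: "h \<in> G" "\<not> anticomm n h b" using h by (auto simp: cent_def)
  have ab: "\<not> anticomm n r' b" "\<not> anticomm n h' b" using r' h' by (auto simp: cent_def)
  define w1 where "w1 = pmul b g"
  have w1: "w1 \<in> G" unfolding w1_def using closedD[OF cl bG g(1)] g(2) anti_sym by metis
  define w2 where "w2 = pmul w1 r"
  have w2: "w2 \<in> G" unfolding w2_def using closedD[OF cl w1 rG(1)] g rG anti_sym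
    by (simp add: w1_def amul)
  define w3 where "w3 = pmul w2 h"
  have w3: "w3 \<in> G" unfolding w3_def using closedD[OF cl w2 hG(1)] g rG hG rh anti_sym
    by (simp add: w1_def w2_def amul)
  define w where "w = pmul w3 g"
  have wG: "w \<in> G" unfolding w_def using closedD[OF cl w3 g(1)] g rG hG rh anti_sym
    by (simp add: w1_def w2_def w3_def amul)
  have wz: "anticomm n w z = (anticomm n b z \<noteq> (anticomm n r z \<noteq> anticomm n h z))" for z
    unfolding w_def w3_def w2_def w1_def by (simp add: amul; cases "anticomm n g z"; cases "anticomm n b z"; simp)
  have wc: "w \<in> cent n G b" using wG wz rG hG by (simp add: cent_def anti_sym)
  show ?thesis
  proof (cases "anticomm n h r'")
    case True
    then show ?thesis using fe_edge[OF r r' rr'] fe_edge[OF r' h] anti_sym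
      by (metis rtrancl_trans)
  next
    case F1: False
    show ?thesis
    proof (cases "anticomm n r h'")
      case True
      then show ?thesis using fe_edge[OF r h'] fe_edge[OF h' h] hh' anti_sym
        by (metis rtrancl_trans)
    next
      case F2: False
      have "anticomm n w r'" using wz[of r'] ab rr' F1 anti_sym by metis
      moreover have "anticomm n w h'" using wz[of h'] ab hh' F2 anti_sym by metis
      ultimately show ?thesis using fe_edge[OF r r' rr'] fe_edge[OF r' wc] fe_edge[OF wc h'] fe_edge[OF h' h] hh' anti_sym
        by (metis rtrancl_trans)
    qed
  qed
qed


lemma bridge2:
  assumes cl: "closedP n G" and bG: "b \<in> G"
    and r: "r \<in> cent n G b" and r': "r' \<in> cent n G b" and rr': "anticomm n r r'"
    and h: "h \<in> cent n G b" and h': "h' \<in> cent n G b" and hh': "anticomm n h h'"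
    and g: "g \<in> G" "anticomm n g b" "anticomm n g r"
    and g': "g' \<in> G" "anticomm n g' b" "anticomm n g' h"
  shows "(r, h) \<in> (frustration_edges n (cent n G b))\<^sup>*"
proof -
  have rG: "r \<in> G" "\<not> anticomm n r b" using r by (auto simp: cent_def)
  have hG: "h \<in> G" "\<not> anticomm n h b" using h by (auto simp: cent_def)
  show ?thesis
  proof (cases "anticomm n g h")
    case True
    then show ?thesis using bridge[OF cl bG r r' rr' h h' hh' g True] by simp
  next
    case gh: False
    show ?thesis
    proof (cases "anticomm n g' r")
      case True
      have "(h, r) \<in> (frustration_edges n (cent n G b))\<^sup>*"
        using bridge[OF cl bG h h' hh' r r' rr' g' True] by simp
      then show ?thesis by (rule fe_rtr_sym)
    next
      case g'r: False
      show ?thesis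
      proof (cases "anticomm n g g'")
        case True
        define w where "w = pmul g g'"
        have "w \<in> G" unfolding w_def using closedD[OF cl g(1) g'(1) True] .
        then have wc: "w \<in> cent n G b" using g g' by (simp add: cent_def w_def amul)
        have "anticomm n w r" "anticomm n w h" using g g' gh g'r anti_sym
          by (simp_all add: w_def amul) 
        then show ?thesis using fe_edge[OF r wc] fe_edge[OF wc h] anti_sym by (metis rtrancl_trans)
      next
        case False
        define w1 where "w1 = pmul g b"
        have w1: "w1 \<in> G" unfolding w1_def using closedD[OF cl g(1) bG g(2)] .
        have "anticomm n w1 g'" using False g' anti_sym by (simp add: w1_def amul)
        define w where "w = pmul w1 g'"
        have "w \<in> G" unfolding w_def using closedD[OF cl w1 g'(1)] \<open>anticomm n w1 g'\<close> by simp
        then have wc: "w \<in> cent n G b" using g g' by (simp add: cent_def w_def w1_def amul)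
        have "anticomm n w r" "anticomm n w h" using g g' gh g'r rG hG anti_sym
          by (simp_all add: w_def w1_def amul) 
        then show ?thesis using fe_edge[OF r wc] fe_edge[OF wc h] anti_sym by (metis rtrancl_trans)
      qed
    qed
  qed
qed

lemma exit_lemma:
  assumes "(a, z) \<in> (frustration_edges n G)\<^sup>*" and "a \<in> cent n G b"
  shows "(a, z) \<in> (frustration_edges n (cent n G b))\<^sup>* \<or>
    (\<exists>r g. (a, r) \<in> (frustration_edges n (cent n G b))\<^sup>* \<and> r \<in> cent n G b \<and> g \<in> G \<and> anticomm n g b \<and> anticomm n g r)"
  using assms(1)
proof (induction rule: rtrancl_induct)
  case base then show ?case by simp
next
  case (step y z)
  show ?case
  proof (cases "(a, y) \<in> (frustration_edges n (cent n G b))\<^sup>*")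
    case T0: True
    have yc: "y \<in> cent n G b"
      using T0 assms(2) by (cases rule: rtranclE) (auto simp: frustration_edges_def)
    have z: "z \<in> G" "anticomm n y z" using step(2) by (auto simp: frustration_edges_def)
    show ?thesis
    proof (cases "anticomm n z b")
      case True
      then show ?thesis using T0 yc z anti_sym by blast
    next
      case False
      then have "z \<in> cent n G b" using z by (simp add: cent_def)
      then have "(y, z) \<in> frustration_edges n (cent n G b)" using yc z by (simp add: frustration_edges_def)
      then show ?thesis using T0 by (meson rtrancl.rtrancl_into_rtrancl)
    qed
  next
    case False
    then show ?thesis using step.IH by blast
  qed
qed

lemma nonisol:
  assumes "(a, r) \<in> (frustration_edges n S)\<^sup>*" "x \<in> S" "anticomm n a x"
  shows "\<exists>r'\<in>S. anticomm n r r'"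
  using assms(1)
proof (cases rule: rtranclE)
  case base then show ?thesis using assms by blast
next
  case (step y)
  then show ?thesis using anti_sym by (auto simp: frustration_edges_def)
qed

lemma conn_cent:
  assumes cl: "closedP n G" and bG: "b \<in> G"
    and a: "a \<in> cent n G b" and c: "c \<in> cent n G b"
    and x: "x \<in> cent n G b" "anticomm n a x"
    and y: "y \<in> cent n G b" "anticomm n c y"
    and ac: "(a, c) \<in> (frustration_edges n G)\<^sup>*"
  shows "(a, c) \<in> (frustration_edges n (cent n G b))\<^sup>*"
proof -
  have ca: "(c, a) \<in> (frustration_edges n G)\<^sup>*" using ac by (rule fe_rtr_sym)
  note e1 = exit_lemma[OF ac a] and e2 = exit_lemma[OF ca c]
  show ?thesis
  proof (cases "(a, c) \<in> (frustration_edges n (cent n G b))\<^sup>*")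
    case True then show ?thesis .
  next
    case False
    then obtain r g where R: "(a, r) \<in> (frustration_edges n (cent n G b))\<^sup>*" "r \<in> cent n G b"
       "g \<in> G" "anticomm n g b" "anticomm n g r" using e1 by blast
    have "\<not> (c, a) \<in> (frustration_edges n (cent n G b))\<^sup>*" using False fe_rtr_sym by blast
    then obtain h g' where H: "(c, h) \<in> (frustration_edges n (cent n G b))\<^sup>*" "h \<in> cent n G b"
       "g' \<in> G" "anticomm n g' b" "anticomm n g' h" using e2 by blast
    obtain r' where r': "r' \<in> cent n G b" "anticomm n r r'" using nonisol[OF R(1) x] by blast
    obtain h' where h': "h' \<in> cent n G b" "anticomm n h h'" using nonisol[OF H(1) y] by blast
    have "(r, h) \<in> (frustration_edges n (cent n G b))\<^sup>*"
      using bridge2[OF cl bG R(2) r' H(2) h' R(3-5) H(3-5)] .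
    then show ?thesis using R(1) fe_rtr_sym[OF H(1)] by (meson rtrancl_trans)
  qed
qed


lemma lemmaL:
  assumes cl: "closedP n G" and a: "a \<in> G" and c: "c \<in> G"
    and x: "x \<in> G" "anticomm n a x"
    and y: "y \<in> G" "anticomm n c y"
    and ac: "(a, c) \<in> (frustration_edges n G)\<^sup>*"
  shows "\<exists>g\<in>G. anticomm n g a \<and> anticomm n g c"
proof (rule ccontr)
  assume "\<not> ?thesis"
  then have H: "\<And>g. g \<in> G \<Longrightarrow> anticomm n g a \<Longrightarrow> \<not> anticomm n g c" by blast
  define Ga where "Ga = {g\<in>G. anticomm n g a}"
  define Gc where "Gc = {g\<in>G. anticomm n g c}"
  have F1: "\<not> anticomm n u v" if "u \<in> Ga" "v \<in> Gc" for u v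
  proof
    assume uv: "anticomm n u v"
    have "pmul u v \<in> G" using closedD[OF cl _ _ uv] that by (auto simp: Ga_def Gc_def)
    moreover have "anticomm n v a \<Longrightarrow> False" using H that anti_sym by (auto simp: Ga_def Gc_def)
    ultimately show False using H[of "pmul u v"] H[of u] that by (auto simp: Ga_def Gc_def amul)
  qed
  define As where "As = {g\<in>G. \<exists>u\<in>Ga. anticomm n g u}"
  define Cs where "Cs = {g\<in>G. \<exists>v\<in>Gc. anticomm n g v}"
  have F2: "g \<notin> As \<inter> Cs" for g
  proof
    assume "g \<in> As \<inter> Cs"
    then obtain u v where g: "g \<in> G" and u: "u \<in> Ga" "anticomm n g u" and v: "v \<in> Gc" "anticomm n g v"
      by (auto simp: As_def Cs_def)
    show False
    proof (cases "anticomm n g a")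
      case True
      then have "g \<in> Ga" using g by (simp add: Ga_def)
      then show False using F1 v by blast
    next
      case ga: False
      show False
      proof (cases "anticomm n g c")
        case True
        then have "g \<in> Gc" using g by (simp add: Gc_def)
        then show False using F1 u anti_sym by blast
      next
        case False
        have wG: "pmul g u \<in> G" using closedD[OF cl g _ u(2)] u by (simp add: Ga_def)
        have "pmul g u \<in> Ga" using wG u ga by (simp add: Ga_def amul)
        moreover have "anticomm n (pmul g u) v" using F1[OF u(1) v(1)] v by (simp add: amul)
        ultimately show False using F1 v by blast
      qed
    qed
  qed
  have F3: "\<not> anticomm n g1 g2" if g1: "g1 \<in> As" and g2: "g2 \<in> Cs" for g1 g2
  proof
    assume gg: "anticomm n g1 g2"
    obtain u where u: "u \<in> Ga" "anticomm n g1 u" using g1 by (auto simp: As_def)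
    obtain v where v: "v \<in> Gc" "anticomm n g2 v" using g2 by (auto simp: Cs_def)
    have G1: "g1 \<in> G" "g2 \<in> G" using g1 g2 by (auto simp: As_def Cs_def)
    have wG: "pmul g1 g2 \<in> G" using closedD[OF cl G1 gg] .
    have "\<not> anticomm n g2 u" using F2[of g2] g2 u G1 by (auto simp: As_def)
    then have "pmul g1 g2 \<in> As" using wG u by (auto simp: As_def amul)
    moreover have "\<not> anticomm n g1 v" using F2[of g1] g1 v G1 by (auto simp: Cs_def)
    then have "pmul g1 g2 \<in> Cs" using wG v by (auto simp: Cs_def amul)
    ultimately show False using F2 by blast
  qed
  define Om where "Om = {h\<in>G. h \<in> As \<or> (\<exists>g\<in>As. anticomm n g h)}"
  have "z \<in> Om" if "(a, z) \<in> (frustration_edges n G)\<^sup>*" for z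
    using that
  proof (induction rule: rtrancl_induct)
    case base
    have "x \<in> Ga" using x anti_sym by (simp add: Ga_def)
    then show ?case using a x by (auto simp: Om_def As_def)
  next
    case (step z z')
    have z': "z' \<in> G" "anticomm n z z'" using step(2) by (auto simp: frustration_edges_def)
    show ?case
    proof (cases "z \<in> As")
      case True then show ?thesis using z' by (auto simp: Om_def)
    next
      case False
      then obtain g where g: "g \<in> As" "anticomm n g z" and zG: "z \<in> G"
        using step.IH by (auto simp: Om_def)
      show ?thesis
      proof (cases "anticomm n g z'")
        case True then show ?thesis using g z' by (auto simp: Om_def)
      next
        case gz': False
        obtain u where u: "u \<in> Ga" "anticomm n g u" and gG: "g \<in> G" using g by (auto simp: As_def)
        have wG: "pmul g z \<in> G" using closedD[OF cl gG zG g(2)] .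
        have "\<not> anticomm n z u" using False zG u by (auto simp: As_def)
        then have "pmul g z \<in> As" using wG u by (auto simp: As_def amul)
        moreover have "anticomm n (pmul g z) z'" using gz' z' by (simp add: amul)
        ultimately show ?thesis using z' by (auto simp: Om_def)
      qed
    qed
  qed
  then have cO: "c \<in> Om" using ac by blast
  have "y \<in> Gc" using y anti_sym by (simp add: Gc_def)
  then have cC: "c \<in> Cs" using c y by (auto simp: Cs_def)
  show False using cO cC F2 F3 by (auto simp: Om_def)
qed


definition Gj :: "nat \<Rightarrow> pstring set \<Rightarrow> (nat \<Rightarrow> pstring) \<Rightarrow> nat \<Rightarrow> pstring set" where
  "Gj n G b j = {g\<in>G. \<forall>i\<in>{1..j}. \<not> anticomm n g (b i)}"

lemma Gj_closed: "closedP n G \<Longrightarrow> closedP n (Gj n G b j)"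
  unfolding closedP_def Gj_def by (auto simp: amul)

lemma Gj_suc: "Gj n G b (Suc j) = cent n (Gj n G b j) (b (Suc j))"
proof -
  have "{1..Suc j} = insert (Suc j) {1..j}" by auto
  then show ?thesis unfolding Gj_def cent_def by auto
qed

lemma Gj_0: "Gj n G b 0 = G"
  unfolding Gj_def by auto

lemma conn_iter:
  assumes cl: "closedP n G" and bG: "\<forall>i\<in>{1..m}. b i \<in> G"
    and bc: "\<forall>i\<in>{1..m}. \<forall>i'\<in>{1..m}. \<not> anticomm n (b i) (b i')"
    and a: "a \<in> Gj n G b m" and c: "c \<in> Gj n G b m"
    and x: "x \<in> Gj n G b m" "anticomm n a x"
    and y: "y \<in> Gj n G b m" "anticomm n c y"
    and ac: "(a, c) \<in> (frustration_edges n G)\<^sup>*"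
  shows "j \<le> m \<Longrightarrow> (a, c) \<in> (frustration_edges n (Gj n G b j))\<^sup>*"
proof (induction j)
  case 0 then show ?case using ac by (simp add: Gj_0)
next
  case (Suc j)
  have sub: "Gj n G b m \<subseteq> Gj n G b (Suc j)" using Suc.prems unfolding Gj_def by auto
  have bj: "b (Suc j) \<in> Gj n G b j" using bG bc Suc.prems unfolding Gj_def by auto
  show ?case unfolding Gj_suc
    apply (rule conn_cent[OF Gj_closed[OF cl] bj])
    using a c x y sub Suc by (auto simp: Gj_suc)
qed

lemma cart_KK: "pauli_cartan n K M \<Longrightarrow> x \<in> K \<Longrightarrow> y \<in> K \<Longrightarrow> anticomm n x y \<Longrightarrow> pmul x y \<in> K"
  unfolding pauli_cartan_def by blast
lemma cart_MM: "pauli_cartan n K M \<Longrightarrow> x \<in> M \<Longrightarrow> y \<in> M \<Longrightarrow> anticomm n x y \<Longrightarrow> pmul x y \<in> K"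
  unfolding pauli_cartan_def by blast
lemma cart_KM: "pauli_cartan n K M \<Longrightarrow> x \<in> K \<Longrightarrow> y \<in> M \<Longrightarrow> anticomm n x y \<Longrightarrow> pmul x y \<in> M"
  unfolding pauli_cartan_def by blast
lemma cart_MK: "pauli_cartan n K M \<Longrightarrow> x \<in> M \<Longrightarrow> y \<in> K \<Longrightarrow> anticomm n x y \<Longrightarrow> pmul x y \<in> M"
  using cart_KM[of n K M y x] pmul_comm anti_sym by metis

lemma cart_closed: "pauli_cartan n K M \<Longrightarrow> closedP n (K \<union> M)"
  unfolding closedP_def using cart_KK cart_MM cart_KM cart_MK by blast

lemma finite_K: "pauli_cartan n K M \<Longrightarrow> finite K"
proof -
  assume "pauli_cartan n K M"
  then have "K \<subseteq> pauli_strings n" by (simp add: pauli_cartan_def)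
  also have "\<dots> \<subseteq> {f. \<forall>x. (x \<in> {0..<n} \<longrightarrow> f x \<in> {PI,PX,PY,PZ}) \<and> (x \<notin> {0..<n} \<longrightarrow> f x = PI)}"
    unfolding pauli_strings_def by (auto intro: pauli.exhaust)
  finally show "finite K" by (rule finite_subset) (rule finite_set_of_finite_funs; simp)
qed

lemma count_le:
  assumes cart: "pauli_cartan n K M" and q: "q \<in> K" and a: "a \<in> M" and c: "c \<in> M"
    and qa: "anticomm n q a" and qc: "anticomm n q c" and ac: "\<not> anticomm n a c"
    and Bs: "\<forall>\<beta>\<in>Bs. \<not> anticomm n q \<beta> \<and> \<not> anticomm n a \<beta> \<and> \<not> anticomm n c \<beta>"
  shows "card {k\<in>K. anticomm n k a \<and> \<not> anticomm n k c \<and> (\<forall>\<beta>\<in>Bs. \<not> anticomm n k \<beta>)}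
     \<le> card {k\<in>K. anticomm n k c \<and> \<not> anticomm n k a \<and> (\<forall>\<beta>\<in>Bs. \<not> anticomm n k \<beta>)}"
    (is "card ?X \<le> card ?Y")
proof -
  define f where "f x = (if anticomm n x q then pmul x q else pmul (pmul (pmul x a) q) c)" for x
  have fY: "f x \<in> ?Y" if x: "x \<in> ?X" for x
  proof (cases "anticomm n x q")
    case True
    have "pmul x q \<in> K" using cart_KK[OF cart _ q True] x by simp
    then show ?thesis using True x qa qc Bs anti_sym by (simp add: f_def amul)
  next
    case False
    have 1: "pmul x a \<in> M" using cart_KM[OF cart _ a] x by simp
    have "anticomm n (pmul x a) q" using False x qa anti_sym by (simp add: amul)
    then have 2: "pmul (pmul x a) q \<in> M" using cart_MK[OF cart 1 q] by simp
    have "anticomm n (pmul (pmul x a) q) c" using False x qa qc ac anti_sym by (simp add: amul)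
    then have 3: "pmul (pmul (pmul x a) q) c \<in> K" using cart_MM[OF cart 2 c] by simp
    show ?thesis using 3 False x qa qc ac Bs anti_sym by (simp add: f_def amul)
  qed
  have fq: "anticomm n (f x) q = anticomm n x q" if "x \<in> ?X" for x
    using that qa qc ac anti_sym by (simp add: f_def amul)
  have inj: "inj_on f ?X"
  proof (rule inj_onI)
    fix x1 x2 assume x1: "x1 \<in> ?X" and x2: "x2 \<in> ?X" and eq: "f x1 = f x2"
    have same: "anticomm n x1 q = anticomm n x2 q" using fq[OF x1] fq[OF x2] eq by simp
    show "x1 = x2"
    proof (cases "anticomm n x1 q")
      case True
      then have "pmul x1 q = pmul x2 q" using eq same by (simp add: f_def)
      then show ?thesis by (metis pmul_cancel)
    next
      case False
      then have "pmul (pmul (pmul x1 a) q) c = pmul (pmul (pmul x2 a) q) c" using eq same by (simp add: f_def)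
      then show ?thesis by (metis pmul_cancel)
    qed
  qed
  have "finite ?Y" using finite_K[OF cart] by simp
  then show ?thesis using card_inj_on_le[OF inj] fY by blast
qed


theorem corollaryC4:
  fixes n d r :: nat and K M :: "pstring set" and b :: "nat \<Rightarrow> pstring"
  assumes cartan: "pauli_cartan n K M"
    and b_in_M: "\<forall>i\<in>{1..d}. b i \<in> M"
    and b_comm: "\<forall>i\<in>{1..d}. \<forall>j\<in>{1..d}. \<not> anticomm n (b i) (b j)"
    and b_conn: "\<forall>i\<in>{1..d}. \<forall>j\<in>{1..d}. (b i, b j) \<in> (frustration_edges n (K \<union> M))\<^sup>*"
    and r_ge: "2 \<le> r" and r_le: "r \<le> d"
    and ne1: "ksub n K b {r - 1} {1..r - 2} \<noteq> {}"
    and ne2: "ksub n K b {r} {1..r - 2} \<noteq> {}"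
  shows "card (ksub n K b {r - 1} {1..r - 2}) = card (ksub n K b {r} {1..r - 2})
       \<and> card (ksub n K b {r - 1} ({1..r - 2} \<union> {r})) = card (ksub n K b {r} {1..r - 1})"
proof -
  define a where "a = b (r - 1)"
  define c where "c = b r"
  define G where "G = K \<union> M"
  define m where "m = r - 2"
  define Bs where "Bs = b ` {1..m}"
  have r1: "r - 1 \<in> {1..d}" "r \<in> {1..d}" using r_ge r_le by auto
  have subd: "{1..m} \<subseteq> {1..d}" using r_le by (auto simp: m_def)
  have aM: "a \<in> M" and cM: "c \<in> M" using b_in_M r1 by (auto simp: a_def c_def)
  have ac: "\<not> anticomm n a c" using b_comm r1 by (simp add: a_def c_def)
  have aB: "\<forall>i\<in>{1..m}. \<not> anticomm n a (b i) \<and> \<not> anticomm n c (b i)"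
    using b_comm r1 subd unfolding a_def c_def by blast
  have cl: "closedP n G" unfolding G_def by (rule cart_closed[OF cartan])
  have KG: "K \<subseteq> G" "M \<subseteq> G" by (auto simp: G_def)
  obtain x where x: "x \<in> K" "anticomm n x a" "\<forall>i\<in>{1..m}. \<not> anticomm n x (b i)"
    using ne1 by (auto simp: ksub_def a_def m_def)
  obtain y where y: "y \<in> K" "anticomm n y c" "\<forall>i\<in>{1..m}. \<not> anticomm n y (b i)"
    using ne2 by (auto simp: ksub_def c_def m_def)
  have xG: "x \<in> Gj n G b m" and yG: "y \<in> Gj n G b m" using x y KG by (auto simp: Gj_def)
  have aG: "a \<in> Gj n G b m" and cG: "c \<in> Gj n G b m" using aM cM KG aB by (auto simp: Gj_def)
  have conn: "(a, c) \<in> (frustration_edges n G)\<^sup>*" using b_conn r1 by (simp add: a_def c_def G_def)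
  have bG: "\<forall>i\<in>{1..m}. b i \<in> G" using b_in_M subd KG by auto
  have bc: "\<forall>i\<in>{1..m}. \<forall>i'\<in>{1..m}. \<not> anticomm n (b i) (b i')" using b_comm subd by blast
  have connm: "(a, c) \<in> (frustration_edges n (Gj n G b m))\<^sup>*"
    using conn_iter[OF cl bG bc aG cG xG _ yG _ conn] x y anti_sym by auto
  obtain g where g: "g \<in> Gj n G b m" "anticomm n g a" "anticomm n g c"
    using lemmaL[OF Gj_closed[OF cl] aG cG xG _ yG _ connm] x y anti_sym by auto
  obtain q where q: "q \<in> K" "anticomm n q a" "anticomm n q c" "\<forall>i\<in>{1..m}. \<not> anticomm n q (b i)"
  proof (cases "g \<in> K")
    case True then show ?thesis using that g by (auto simp: Gj_def)
  next
    case False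
    then have gM: "g \<in> M" using g by (auto simp: Gj_def G_def)
    have "pmul g a \<in> K" using cart_MM[OF cartan gM aM g(2)] .
    moreover have "anticomm n (pmul g a) a" "anticomm n (pmul g a) c"
      using g ac by (simp_all add: amul)
    moreover have "\<forall>i\<in>{1..m}. \<not> anticomm n (pmul g a) (b i)"
      using g aB by (auto simp: amul Gj_def)
    ultimately show ?thesis using that by blast
  qed
  have Bs: "\<forall>\<beta>\<in>Bs. \<not> anticomm n q \<beta> \<and> \<not> anticomm n a \<beta> \<and> \<not> anticomm n c \<beta>"
    using q aB by (auto simp: Bs_def)
  have Bs': "\<forall>\<beta>\<in>Bs. \<not> anticomm n q \<beta> \<and> \<not> anticomm n c \<beta> \<and> \<not> anticomm n a \<beta>"
    using Bs by blast
  define X where "X = {k\<in>K. anticomm n k a \<and> \<not> anticomm n k c \<and> (\<forall>\<beta>\<in>Bs. \<not> anticomm n k \<beta>)}"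
  define Y where "Y = {k\<in>K. anticomm n k c \<and> \<not> anticomm n k a \<and> (\<forall>\<beta>\<in>Bs. \<not> anticomm n k \<beta>)}"
  define Z where "Z = {k\<in>K. anticomm n k a \<and> anticomm n k c \<and> (\<forall>\<beta>\<in>Bs. \<not> anticomm n k \<beta>)}"
  have le1: "card X \<le> card Y" unfolding X_def Y_def
    by (rule count_le[OF cartan q(1) aM cM q(2) q(3) ac Bs])
  have le2: "card Y \<le> card X" unfolding X_def Y_def
    by (rule count_le[OF cartan q(1) cM aM q(3) q(2) _ Bs']) (use ac anti_sym in metis)
  have fin: "finite K" by (rule finite_K[OF cartan])
  have e1: "ksub n K b {r - 1} ({1..r - 2} \<union> {r}) = X"
    unfolding ksub_def X_def Bs_def a_def c_def m_def by auto
  have rr: "{1..r - 1} = {1..r - 2} \<union> {r - 1}" using r_ge by auto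
  have e2: "ksub n K b {r} {1..r - 1} = Y"
    unfolding rr ksub_def Y_def Bs_def a_def c_def m_def by auto
  have e3: "ksub n K b {r - 1} {1..r - 2} = X \<union> Z"
    unfolding ksub_def X_def Z_def Bs_def a_def c_def m_def by auto
  have e4: "ksub n K b {r} {1..r - 2} = Y \<union> Z"
    unfolding ksub_def Y_def Z_def Bs_def a_def c_def m_def by auto
  have fX: "finite X" "finite Y" "finite Z" using fin by (auto simp: X_def Y_def Z_def)
  have "card (X \<union> Z) = card X + card Z"
    by (rule card_Un_disjoint) (use fX in \<open>auto simp: X_def Z_def\<close>)
  moreover have "card (Y \<union> Z) = card Y + card Z"
    by (rule card_Un_disjoint) (use fX in \<open>auto simp: Y_def Z_def\<close>)
  ultimately show ?thesis using e1 e2 e3 e4 le1 le2 by simp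
qed

end
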